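(* Let $A$ be a multiset of points in $\mathbb{Z}^2$ with $|A|\geq 6$ (counting multiplicities). If $\boldsymbol{p}\in\mathbb{R}^2$ is a point with $\boldsymbol{p}\notin A$ that has half-space depth $2$ with respect to $A$, then $A$ can be partitioned into two submultisets $A_1,A_2$ with $\boldsymbol{p}\in\conv(A_1)\cap\conv(A_2)$.
   Context: A point $\boldsymbol{p}$ has half-space depth $t$ with respect to a multiset $A$ if every closed half-plane containing $\boldsymbol{p}$ contains at least $t$ points of $A$, counted with multiplicity. A partition of a multiset into submultisets means the multiplicities of each element in the parts sum to its multiplicity in the multiset. *)

theory Defs
  imports "HOL-Analysis.Analysis" "HOL-Library.Multiset"
begin

definition closed_halfplane :: "(real \<times> real) \<Rightarrow> real \<Rightarrow> (real \<times> real) set" where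
  "closed_halfplane a b = {x. a \<bullet> x \<le> b}"

definition has_halfspace_depth :: "(real \<times> real) \<Rightarrow> nat \<Rightarrow> (real \<times> real) multiset \<Rightarrow> bool" where
  "has_halfspace_depth p t A \<longleftrightarrow>
     (\<forall>a b. a \<noteq> 0 \<longrightarrow> p \<in> closed_halfplane a b \<longrightarrow>
        size (filter_mset (\<lambda>x. x \<in> closed_halfplane a b) A) \<ge> t)"

definition integral_point :: "(real \<times> real) \<Rightarrow> bool" where
  "integral_point x \<longleftrightarrow> fst x \<in> \<int> \<and> snd x \<in> \<int>"

end

theory Submission
  imports Defs
begin


lemma cos_nonpos_range: "pi/2 \<le> r \<Longrightarrow> r \<le> 3*pi/2 \<Longrightarrow> cos r \<le> 0"
proof -
  assume a: "pi/2 \<le> r" "r \<le> 3*pi/2"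
  have "0 \<le> cos (r - pi)" by (rule cos_ge_zero) (use a in auto)
  thus ?thesis by simp
qed

lemma cos_nonpos_range2: "-pi \<le> r \<Longrightarrow> r \<le> -pi/2 \<Longrightarrow> cos r \<le> 0"
proof -
  assume a: "-pi \<le> r" "r \<le> -pi/2"
  have "0 \<le> cos (r + pi)" by (rule cos_ge_zero) (use a in auto)
  thus ?thesis by simp
qed

lemma cos_shift_int: "cos ((x::real) - 2*pi * of_int (k::int)) = cos x"
  using cos_int_2pin[of k] sin_int_2pin[of k] by (simp add: cos_diff)

lemma cos_L:
  fixes x y z :: real
  assumes "x \<le> y" "y \<le> z" "cos x > 0" "cos y \<le> 0" "cos z > 0"
  shows "z - x > pi"
proof (rule ccontr)
  assume nz: "\<not> z - x > pi"
  define k where "k = \<lfloor>x/(2*pi) + 1/2\<rfloor>"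
  define r where "r = x - 2*pi * of_int k"
  have k1: "of_int k \<le> x/(2*pi) + 1/2" "x/(2*pi) + 1/2 < of_int k + 1"
    unfolding k_def by linarith+
  have "of_int k * (2*pi) \<le> x + pi" using k1(1) by (simp add: field_simps)
  hence r1: "-pi \<le> r" unfolding r_def by (simp add: algebra_simps)
  have "x + pi < (of_int k + 1) * (2*pi)" using k1(2) by (simp add: field_simps)
  hence r2: "r < pi" unfolding r_def by (simp add: algebra_simps)
  have cr: "cos r > 0" using assms(3) unfolding r_def by (simp add: cos_shift_int)
  have r3: "r < pi/2"
  proof (rule ccontr)
    assume "\<not> r < pi/2" thus False using cos_nonpos_range[of r] r2 cr by auto
  qed
  have r4: "r > -pi/2"
  proof (rule ccontr)
    assume "\<not> r > -pi/2" thus False using cos_nonpos_range2[of r] r1 cr by auto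
  qed
  define y' where "y' = y - 2*pi * of_int k"
  define z' where "z' = z - 2*pi * of_int k"
  have cy: "cos y' \<le> 0" using assms(4) unfolding y'_def by (simp add: cos_shift_int)
  have cz: "cos z' > 0" using assms(5) unfolding z'_def by (simp add: cos_shift_int)
  have "y' \<ge> pi/2"
  proof (rule ccontr)
    assume "\<not> y' \<ge> pi/2"
    hence "cos y' > 0" using r4 assms(1) unfolding y'_def r_def
      by (intro cos_gt_zero_pi) auto
    thus False using cy by simp
  qed
  moreover have "z' \<le> 3*pi/2" using nz r3 unfolding z'_def r_def by auto
  moreover have "y' \<le> z'" using assms(2) unfolding y'_def z'_def by auto
  ultimately have "cos z' \<le> 0" using cos_nonpos_range[of z'] by auto
  thus False using cz by simp
qed

lemma cos_noalt:
  fixes t1 t2 t3 t4 :: real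
  assumes "t1 \<le> t2" "t2 \<le> t3" "t3 \<le> t4" "t4 - t1 < 2*pi"
  shows "\<not> (cos t1 \<le> 0 \<and> cos t2 > 0 \<and> cos t3 \<le> 0 \<and> cos t4 > 0)"
    and "\<not> (cos t1 > 0 \<and> cos t2 \<le> 0 \<and> cos t3 > 0 \<and> cos t4 \<le> 0)"
proof -
  show "\<not> (cos t1 \<le> 0 \<and> cos t2 > 0 \<and> cos t3 \<le> 0 \<and> cos t4 > 0)"
  proof
    assume h: "cos t1 \<le> 0 \<and> cos t2 > 0 \<and> cos t3 \<le> 0 \<and> cos t4 > 0"
    have "t4 - t2 > pi" using cos_L[of t2 t3 t4] h assms by auto
    moreover have "(t2 + 2*pi) - t4 > pi" using cos_L[of t4 "t1 + 2*pi" "t2 + 2*pi"] h assms by auto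
    ultimately show False by auto
  qed
  show "\<not> (cos t1 > 0 \<and> cos t2 \<le> 0 \<and> cos t3 > 0 \<and> cos t4 \<le> 0)"
  proof
    assume h: "cos t1 > 0 \<and> cos t2 \<le> 0 \<and> cos t3 > 0 \<and> cos t4 \<le> 0"
    have "t3 - t1 > pi" using cos_L[of t1 t2 t3] h assms by auto
    moreover have "(t1 + 2*pi) - t3 > pi" using cos_L[of t3 t4 "t1 + 2*pi"] h assms by auto
    ultimately show False by auto
  qed
qed



definition noalt :: "nat \<Rightarrow> nat set \<Rightarrow> bool" where
  "noalt n S \<longleftrightarrow> (\<forall>i k l m. i<k \<longrightarrow> k<l \<longrightarrow> l<m \<longrightarrow> m<n \<longrightarrow>
     \<not>(i\<in>S \<and> k\<notin>S \<and> l\<in>S \<and> m\<notin>S) \<and> \<not>(i\<notin>S \<and> k\<in>S \<and> l\<notin>S \<and> m\<in>S))"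

lemma comb:
  fixes S :: "nat set" and c :: "nat \<Rightarrow> bool"
  assumes S: "S \<subseteq> {..<n}" and cS: "card S \<ge> 2" and na: "noalt n S"
    and adj: "\<And>i. Suc i < n \<Longrightarrow> i \<noteq> j \<Longrightarrow> c i \<noteq> c (Suc i)"
    and wrap: "c 0 \<noteq> c (n - 1)"
    and nj: "S \<noteq> {j, Suc j}"
  shows "(\<exists>i\<in>S. c i) \<and> (\<exists>i\<in>S. \<not> c i)"
proof -
  have fin: "finite S" using S finite_subset by blast
  have ne: "S \<noteq> {}" using cS by auto
  define l where "l = Min S"
  define u where "u = Max S"
  have lS: "l \<in> S" and uS: "u \<in> S" unfolding l_def u_def using fin ne by auto
  have lmin: "\<And>x. x \<in> S \<Longrightarrow> l \<le> x" and umax: "\<And>x. x \<in> S \<Longrightarrow> x \<le> u"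
    unfolding l_def u_def using fin by auto
  have un: "u < n" using uS S by auto
  have lu: "l < u"
  proof (rule ccontr)
    assume "\<not> l < u"
    hence "S \<subseteq> {l}" using lmin umax by force
    hence "card S \<le> 1" using card_mono[of "{l}" S] by (simp add: subset_singleton_iff)
    thus False using cS by simp
  qed
  have both: "\<And>a b. a \<in> S \<Longrightarrow> b \<in> S \<Longrightarrow> c a \<noteq> c b \<Longrightarrow> ?thesis" by metis
  show ?thesis
  proof (cases "\<forall>k. l \<le> k \<and> k \<le> u \<longrightarrow> k \<in> S")
    case True
    have l1: "Suc l \<in> S" using True lu by auto
    show ?thesis
    proof (cases "l = j")
      case False
      thus ?thesis using both[OF lS l1] adj[of l] lu un by auto
    next
      case True2: True
      have "u \<noteq> Suc l"
      proof
        assume "u = Suc l"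
        hence "S = {j, Suc j}" using lmin umax lS l1 True2 by fastforce
        thus False using nj by simp
      qed
      hence l2: "Suc (Suc l) \<in> S" using True lu by auto
      have "c (Suc l) \<noteq> c (Suc (Suc l))" using adj[of "Suc l"] True2 l2 S by auto
      thus ?thesis using both[OF l1 l2] by auto
    qed
  next
    case False
    then obtain k where k: "l < k" "k < u" "k \<notin> S" using lS uS by (metis le_neq_implies_less)
    have z: "0 \<in> S"
    proof (rule ccontr)
      assume "0 \<notin> S"
      hence "0 < l" using lS by (cases l) auto
      thus False using na k lS uS un unfolding noalt_def by (meson \<open>0 \<notin> S\<close>)
    qed
    have nm: "n - 1 \<in> S"
    proof (rule ccontr)
      assume h: "n - 1 \<notin> S"
      hence "u < n - 1" using uS un by (cases "u = n - 1") auto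
      thus False using na k lS uS un h unfolding noalt_def
        by (metis diff_less less_nat_zero_code nat_neq_iff zero_less_one)
    qed
    show ?thesis using both[OF z nm] wrap by auto
  qed
qed



lemma h1:
  fixes c0 c2 c4 x y z :: real
  assumes "c0 \<ge> 0" "c2 \<ge> 0" "c4 \<ge> 0" "x > 0" "y > 0" "z > 0" "c0*x + c2*y + c4*z = 0"
  shows "c0 = 0 \<and> c2 = 0 \<and> c4 = 0"
proof -
  have "c0*x \<ge> 0" "c2*y \<ge> 0" "c4*z \<ge> 0" using assms by simp_all
  hence "c0*x = 0" "c2*y = 0" "c4*z = 0" using assms(7) by linarith+
  thus ?thesis using assms by simp
qed

lemma h2:
  fixes c0 c2 c4 x y z x6 y6 z6 :: real
  assumes nz: "\<not> (c0 = 0 \<and> c2 = 0 \<and> c4 = 0)"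
    and "c0 \<le> 0" "c2 \<ge> 0" "c4 \<ge> 0" "x \<le> 0" "y > 0" "z > 0" "c0*x + c2*y + c4*z = 0"
    and "x6 > 0" "y6 > 0" "z6 > 0" "c0*x6 + c2*y6 + c4*z6 = 0"
  shows False
proof -
  have "c0*x \<ge> 0" using assms by (simp add: mult_nonpos_nonpos)
  moreover have "c2*y \<ge> 0" "c4*z \<ge> 0" using assms by simp_all
  ultimately have "c2*y = 0" "c4*z = 0" using assms(8) by linarith+
  hence "c2 = 0" "c4 = 0" using assms by simp_all
  hence "c0*x6 = 0" using assms(12) by simp
  thus False using nz \<open>c2 = 0\<close> \<open>c4 = 0\<close> assms(9) by simp
qed

lemma sign3:
  fixes c0 c2 c4 x0 y0 z0 x2 y2 z2 x4 y4 z4 x6 y6 z6 :: real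
  assumes nz: "\<not> (c0 = 0 \<and> c2 = 0 \<and> c4 = 0)"
    and e0: "c0*x0 + c2*y0 + c4*z0 = 0" and "x0 \<le> 0" "y0 > 0" "z0 > 0"
    and e2: "c0*x2 + c2*y2 + c4*z2 = 0" and "x2 > 0" "y2 \<le> 0" "z2 > 0"
    and e4: "c0*x4 + c2*y4 + c4*z4 = 0" and "x4 > 0" "y4 > 0" "z4 \<le> 0"
    and e6: "c0*x6 + c2*y6 + c4*z6 = 0" and "x6 > 0" "y6 > 0" "z6 > 0"
  shows False
proof -
  have nz': "\<not> (-c0 = 0 \<and> -c2 = 0 \<and> -c4 = 0)" using nz by simp
  have n0: "(-c0)*x0 + (-c2)*y0 + (-c4)*z0 = 0" using e0 by simp
  have n2: "(-c0)*x2 + (-c2)*y2 + (-c4)*z2 = 0" using e2 by simp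
  have n4: "(-c0)*x4 + (-c2)*y4 + (-c4)*z4 = 0" using e4 by simp
  have n6: "(-c0)*x6 + (-c2)*y6 + (-c4)*z6 = 0" using e6 by simp
  have p2: "c2*y2 + c0*x2 + c4*z2 = 0" using e2 by simp
  have p6: "c2*y6 + c0*x6 + c4*z6 = 0" using e6 by simp
  have p4: "c4*z4 + c0*x4 + c2*y4 = 0" using e4 by simp
  have p6': "c4*z6 + c0*x6 + c2*y6 = 0" using e6 by simp
  have q2: "(-c2)*y2 + (-c0)*x2 + (-c4)*z2 = 0" using e2 by simp
  have q6: "(-c2)*y6 + (-c0)*x6 + (-c4)*z6 = 0" using e6 by simp
  have q4: "(-c4)*z4 + (-c0)*x4 + (-c2)*y4 = 0" using e4 by simp
  have q6': "(-c4)*z6 + (-c0)*x6 + (-c2)*y6 = 0" using e6 by simp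
  have nz2: "\<not> (c2 = 0 \<and> c0 = 0 \<and> c4 = 0)" "\<not> (c4 = 0 \<and> c0 = 0 \<and> c2 = 0)"
    "\<not> (-c2 = 0 \<and> -c0 = 0 \<and> -c4 = 0)" "\<not> (-c4 = 0 \<and> -c0 = 0 \<and> -c2 = 0)" using nz by auto
  consider "c0 \<ge> 0" "c2 \<ge> 0" "c4 \<ge> 0" | "c0 \<le> 0" "c2 \<le> 0" "c4 \<le> 0"
    | "c0 \<le> 0" "c2 \<ge> 0" "c4 \<ge> 0" | "c0 \<ge> 0" "c2 \<le> 0" "c4 \<le> 0"
    | "c2 \<le> 0" "c0 \<ge> 0" "c4 \<ge> 0" | "c2 \<ge> 0" "c0 \<le> 0" "c4 \<le> 0"
    | "c4 \<le> 0" "c0 \<ge> 0" "c2 \<ge> 0" | "c4 \<ge> 0" "c0 \<le> 0" "c2 \<le> 0"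
    by linarith
  thus False
  proof cases
    case 1 thus False using h1[OF _ _ _ _ _ _ e6] nz assms by auto
  next
    case 2 thus False using h1[OF _ _ _ _ _ _ n6] nz assms by auto
  next
    case 3 thus False using h2[OF nz _ _ _ _ _ _ e0 _ _ _ e6] assms by auto
  next
    case 4 thus False using h2[OF nz' _ _ _ _ _ _ n0 _ _ _ n6] assms by auto
  next
    case 5 thus False using h2[OF nz2(1) _ _ _ _ _ _ p2 _ _ _ p6] assms by auto
  next
    case 6 thus False using h2[OF nz2(3) _ _ _ _ _ _ q2 _ _ _ q6] assms by auto
  next
    case 7 thus False using h2[OF nz2(2) _ _ _ _ _ _ p4 _ _ _ p6'] assms by auto
  next
    case 8 thus False using h2[OF nz2(4) _ _ _ _ _ _ q4 _ _ _ q6'] assms by auto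
  qed
qed

lemma dep3:
  fixes a b c :: "real \<times> real"
  shows "\<exists>c0 c2 c4. \<not> (c0 = 0 \<and> c2 = 0 \<and> c4 = 0) \<and> c0 *\<^sub>R a + c2 *\<^sub>R b + c4 *\<^sub>R c = 0"
proof -
  obtain a1 a2 b1 b2 c1 c2 where ab: "a = (a1,a2)" "b = (b1,b2)" "c = (c1,c2)" by (cases a, cases b, cases c) auto
  show ?thesis
  proof (cases "b1*c2 - b2*c1 = 0 \<and> c1*a2 - c2*a1 = 0 \<and> a1*b2 - a2*b1 = 0")
    case False
    show ?thesis
      by (rule exI[of _ "b1*c2 - b2*c1"], rule exI[of _ "c1*a2 - c2*a1"], rule exI[of _ "a1*b2 - a2*b1"])
        (use False in \<open>auto simp: ab algebra_simps zero_prod_def\<close>)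
  next
    case True
    show ?thesis
    proof (cases "a = 0")
      case True thus ?thesis by (intro exI[of _ 1] exI[of _ 0]) auto
    next
      case anz: False
      show ?thesis
      proof (cases "a1 = 0")
        case False
        show ?thesis
          by (rule exI[of _ b1], rule exI[of _ "-a1"], rule exI[of _ 0])
            (use False True in \<open>auto simp: ab algebra_simps zero_prod_def\<close>)
      next
        case a10: True
        hence "a2 \<noteq> 0" using anz ab by (auto simp: zero_prod_def)
        thus ?thesis
          by (intro exI[of _ b2] exI[of _ "-a2"] exI[of _ 0])
            (use a10 True in \<open>auto simp: ab algebra_simps zero_prod_def\<close>)
      qed
    qed
  qed
qed

definition ang :: "real \<times> real \<Rightarrow> real" where
  "ang v = (SOME t. 0 \<le> t \<and> t < 2*pi \<and> v = norm v *\<^sub>R (cos t, sin t))"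

lemma ang_prop:
  assumes "v \<noteq> 0"
  shows "0 \<le> ang v \<and> ang v < 2*pi \<and> v = norm v *\<^sub>R (cos (ang v), sin (ang v))"
proof -
  obtain x y where v: "v = (x,y)" by (cases v)
  define r where "r = norm v"
  have r: "r > 0" using assms unfolding r_def by auto
  have r2: "r^2 = x^2 + y^2" unfolding r_def v by (simp add: norm_Pair)
  have "(x/r)^2 + (y/r)^2 = (x^2 + y^2)/r^2" by (simp add: power_divide add_divide_distrib)
  also have "\<dots> = 1" by (subst r2[symmetric]) (use r in simp)
  finally have "(x/r)^2 + (y/r)^2 = 1" .
  then obtain t where t: "0 \<le> t" "t < 2*pi" "x/r = cos t" "y/r = sin t" by (rule sincos_total_2pi)
  have "v = r *\<^sub>R (cos t, sin t)" using t r by (auto simp: v field_simps)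
  hence "v = norm v *\<^sub>R (cos t, sin t)" unfolding r_def .
  hence "\<exists>t. 0 \<le> t \<and> t < 2*pi \<and> v = norm v *\<^sub>R (cos t, sin t)" using t by blast
  thus ?thesis unfolding ang_def by (rule someI_ex)
qed

lemma inner_ang:
  assumes "a \<noteq> 0" "v \<noteq> 0"
  shows "(inner a v \<le> 0) \<longleftrightarrow> cos (ang v - ang a) \<le> 0"
proof -
  have ea: "a = norm a *\<^sub>R (cos (ang a), sin (ang a))" using ang_prop[OF assms(1)] by blast
  have ev: "v = norm v *\<^sub>R (cos (ang v), sin (ang v))" using ang_prop[OF assms(2)] by blast
  have "inner a v = norm a * norm v * cos (ang v - ang a)"
    by (subst ea, subst ev) (simp add: cos_diff algebra_simps)
  moreover have "norm a * norm v > 0" using assms by auto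
  ultimately show ?thesis using mult_le_cancel_left_pos[of "norm a * norm v" "cos (ang v - ang a)" 0] by simp
qed


lemma hull_crit:
  fixes T :: "(real \<times> real) set"
  assumes "finite T" and h: "\<And>a. a \<noteq> 0 \<Longrightarrow> \<exists>x\<in>T. inner a x \<le> inner a p"
  shows "p \<in> convex hull T"
proof (rule ccontr)
  assume np: "p \<notin> convex hull T"
  have "closed (convex hull T)" using assms(1) finite_imp_compact_convex_hull compact_imp_closed by blast
  then obtain a b where ab: "inner a p < b" "\<forall>x\<in>convex hull T. inner a x > b"
    using separating_hyperplane_closed_point[OF convex_convex_hull _ np] by blast
  have "a \<noteq> 0"
  proof
    assume "a = 0"
    hence "0 < b" using ab(1) by simp
    moreover have "T \<noteq> {}" using h[of "(1,0)"] by (auto simp: zero_prod_def)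
    then obtain x where "x \<in> T" by auto
    hence "inner a x > b" using ab(2) hull_inc[of x T] by blast
    ultimately show False using \<open>a = 0\<close> by simp
  qed
  then obtain x where x: "x \<in> T" "inner a x \<le> inner a p" using h by blast
  have "inner a x > b" using ab(2) hull_inc[OF x(1)] by blast
  thus False using x(2) ab(1) by simp
qed

theorem lemma3:
  fixes A :: "(real \<times> real) multiset" and p :: "real \<times> real"
  assumes "\<forall>x \<in># A. integral_point x"
    and "size A \<ge> 6"
    and "p \<notin># A"
    and "has_halfspace_depth p 2 A"
  shows "\<exists>A1 A2. A = A1 + A2 \<and> p \<in> convex hull (set_mset A1) \<and> p \<in> convex hull (set_mset A2)"
proof -
  obtain xs0 where xs0: "mset xs0 = A" using ex_mset by blast
  define key where "key x = ang (x - p)" for x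
  define xs where "xs = sort_key key xs0"
  have mxs: "mset xs = A" unfolding xs_def using xs0 by simp
  define n where "n = length xs"
  have n6: "n \<ge> 6" using assms(2) mxs unfolding n_def by (metis size_mset)
  define W where "W i = xs!i - p" for i
  have Wnz: "W i \<noteq> 0" if "i < n" for i
  proof -
    have "xs!i \<in># A" using that mxs unfolding n_def by (metis nth_mem set_mset_mset)
    thus ?thesis using assms(3) unfolding W_def by auto
  qed
  have srt: "key (xs!i) \<le> key (xs!k)" if "i \<le> k" "k < n" for i k
  proof -
    have "sorted (map key xs)" unfolding xs_def by simp
    from sorted_nth_mono[OF this, of i k] that show ?thesis unfolding n_def by simp
  qed
  have krange: "0 \<le> key (xs!i) \<and> key (xs!i) < 2*pi" if "i < n" for i
    using ang_prop[OF Wnz[OF that]] unfolding key_def W_def by simp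
  define Sa where "Sa a = {i. i < n \<and> inner a (W i) \<le> 0}" for a
  have Sasub: "Sa a \<subseteq> {..<n}" for a unfolding Sa_def by auto
  have memS: "i \<in> Sa a \<longleftrightarrow> cos (key (xs!i) - ang a) \<le> 0" if "a \<noteq> 0" "i < n" for a i
    using inner_ang[OF that(1) Wnz[OF that(2)]] that unfolding Sa_def key_def W_def by simp
  have depth: "card (Sa a) \<ge> 2" if "a \<noteq> 0" for a
  proof -
    have "p \<in> closed_halfplane a (inner a p)" unfolding closed_halfplane_def by simp
    hence "size (filter_mset (\<lambda>x. x \<in> closed_halfplane a (inner a p)) A) \<ge> 2"
      using assms(4) that unfolding has_halfspace_depth_def by blast
    also have "size (filter_mset (\<lambda>x. x \<in> closed_halfplane a (inner a p)) A)
       = length (filter (\<lambda>x. x \<in> closed_halfplane a (inner a p)) xs)"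
      unfolding mxs[symmetric] by (metis mset_filter size_mset)
    also have "\<dots> = card {i. i < n \<and> xs!i \<in> closed_halfplane a (inner a p)}"
      unfolding n_def by (rule length_filter_conv_card)
    also have "{i. i < n \<and> xs!i \<in> closed_halfplane a (inner a p)} = Sa a"
      unfolding Sa_def closed_halfplane_def W_def by (auto simp: inner_diff_right)
    finally show ?thesis .
  qed
  have na: "noalt n (Sa a)" if "a \<noteq> 0" for a
    unfolding noalt_def
  proof (intro allI impI)
    fix i k l m assume h: "i < k" "k < l" "l < m" "m < n"
    let ?t = "\<lambda>q. key (xs!q) - ang a"
    have t: "?t i \<le> ?t k" "?t k \<le> ?t l" "?t l \<le> ?t m" "?t m - ?t i < 2*pi"
      using srt[of i k] srt[of k l] srt[of l m] krange[of i] krange[of m] h by auto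
    have m: "i \<in> Sa a \<longleftrightarrow> cos (?t i) \<le> 0" "k \<in> Sa a \<longleftrightarrow> cos (?t k) \<le> 0"
      "l \<in> Sa a \<longleftrightarrow> cos (?t l) \<le> 0" "m \<in> Sa a \<longleftrightarrow> cos (?t m) \<le> 0"
      using memS[OF that] h by auto
    show "\<not> (i \<in> Sa a \<and> k \<notin> Sa a \<and> l \<in> Sa a \<and> m \<notin> Sa a) \<and>
          \<not> (i \<notin> Sa a \<and> k \<in> Sa a \<and> l \<notin> Sa a \<and> m \<in> Sa a)"
      using cos_noalt[OF t] unfolding m by auto
  qed
  obtain c :: "nat \<Rightarrow> bool" and j where
    adj: "\<And>i. Suc i < n \<Longrightarrow> i \<noteq> j \<Longrightarrow> c i \<noteq> c (Suc i)" and
    wrap: "c 0 \<noteq> c (n - 1)" and nj: "\<And>a. a \<noteq> 0 \<Longrightarrow> Sa a \<noteq> {j, Suc j}"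
  proof (cases "even n")
    case True
    show ?thesis
    proof (rule that[of n even])
      show "\<And>i. Suc i < n \<Longrightarrow> i \<noteq> n \<Longrightarrow> even i \<noteq> even (Suc i)" by simp
      show "even 0 \<noteq> even (n - 1)" using True n6 by simp
      show "\<And>a. a \<noteq> 0 \<Longrightarrow> Sa a \<noteq> {n, Suc n}"
      proof
        fix a assume "Sa a = {n, Suc n}"
        hence "n \<in> Sa a" by simp
        thus False unfolding Sa_def by simp
      qed
    qed
  next
    case odd: False
    have n7: "n \<ge> 7" using odd n6 by presburger
    have "\<exists>j\<in>{0,2,4::nat}. \<forall>a. a \<noteq> 0 \<longrightarrow> Sa a \<noteq> {j, Suc j}"
    proof (rule ccontr)
      assume "\<not> ?thesis"
      hence ex: "\<And>j. j \<in> {0,2,4::nat} \<Longrightarrow> \<exists>a. a \<noteq> 0 \<and> Sa a = {j, Suc j}" by metis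
      obtain a0 where a0: "a0 \<noteq> 0" "Sa a0 = {0, Suc 0}" using ex[of 0] by (metis insert_iff)
      obtain a2 where a2: "a2 \<noteq> 0" "Sa a2 = {2, Suc 2}" using ex[of 2] by (metis insert_iff)
      obtain a4 where a4: "a4 \<noteq> 0" "Sa a4 = {4, Suc 4}" using ex[of 4] by (metis insert_iff)
      obtain c0 c2 c4 where cc: "\<not> (c0 = 0 \<and> c2 = 0 \<and> c4 = 0)"
        "c0 *\<^sub>R a0 + c2 *\<^sub>R a2 + c4 *\<^sub>R a4 = 0" using dep3 by blast
      have lin: "c0 * inner a0 w + c2 * inner a2 w + c4 * inner a4 w = 0" for w
      proof -
        have "inner (c0 *\<^sub>R a0 + c2 *\<^sub>R a2 + c4 *\<^sub>R a4) w = 0" using cc(2) by simp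
        thus ?thesis by (simp add: inner_add_left)
      qed
      have sg: "inner a (W q) \<le> 0 \<longleftrightarrow> q \<in> Sa a" if "q < n" for a q
        using that unfolding Sa_def by auto
      have q: "0 < n" "2 < n" "4 < n" "6 < n" using n7 by auto
      have s0: "inner a0 (W 0) \<le> 0" "\<not> inner a0 (W 2) \<le> 0" "\<not> inner a0 (W 4) \<le> 0" "\<not> inner a0 (W 6) \<le> 0"
        using sg[OF q(1), of a0] sg[OF q(2), of a0] sg[OF q(3), of a0] sg[OF q(4), of a0] a0(2) by simp_all
      have s2: "\<not> inner a2 (W 0) \<le> 0" "inner a2 (W 2) \<le> 0" "\<not> inner a2 (W 4) \<le> 0" "\<not> inner a2 (W 6) \<le> 0"
        using sg[OF q(1), of a2] sg[OF q(2), of a2] sg[OF q(3), of a2] sg[OF q(4), of a2] a2(2) by simp_all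
      have s4: "\<not> inner a4 (W 0) \<le> 0" "\<not> inner a4 (W 2) \<le> 0" "inner a4 (W 4) \<le> 0" "\<not> inner a4 (W 6) \<le> 0"
        using sg[OF q(1), of a4] sg[OF q(2), of a4] sg[OF q(3), of a4] sg[OF q(4), of a4] a4(2) by simp_all
      show False
        by (rule sign3[OF cc(1) lin[of "W 0"] _ _ _ lin[of "W 2"] _ _ _ lin[of "W 4"] _ _ _ lin[of "W 6"]])
           (use s0 s2 s4 in \<open>simp_all add: not_le\<close>)
    qed
    then obtain j where j: "j \<in> {0,2,4::nat}" "\<And>a. a \<noteq> 0 \<Longrightarrow> Sa a \<noteq> {j, Suc j}" by blast
    show ?thesis
    proof (rule that[of j "\<lambda>i. if i \<le> j then even i else odd i"])
      show "\<And>i. Suc i < n \<Longrightarrow> i \<noteq> j \<Longrightarrow> (if i \<le> j then even i else odd i) \<noteq> (if Suc i \<le> j then even (Suc i) else odd (Suc i))"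
      proof -
        fix i assume "Suc i < n" "i \<noteq> j"
        thus "(if i \<le> j then even i else odd i) \<noteq> (if Suc i \<le> j then even (Suc i) else odd (Suc i))"
          by (cases "Suc i \<le> j") auto
      qed
      show "(if 0 \<le> j then even 0 else odd 0) \<noteq> (if n - 1 \<le> j then even (n - 1) else odd (n - 1))"
      proof -
        have "\<not> n - 1 \<le> j" using j(1) n7 by auto
        moreover have "even (n - 1)" using odd n7 by simp
        ultimately show ?thesis by simp
      qed
      show "\<And>a. a \<noteq> 0 \<Longrightarrow> Sa a \<noteq> {j, Suc j}" by (rule j(2))
    qed
  qed
  have both: "(\<exists>i\<in>Sa a. c i) \<and> (\<exists>i\<in>Sa a. \<not> c i)" if "a \<noteq> 0" for a
    by (rule comb[OF Sasub depth[OF that] na[OF that] adj wrap nj[OF that]])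
  define xs1 where "xs1 = map (nth xs) (filter c [0..<n])"
  define xs2 where "xs2 = map (nth xs) (filter (\<lambda>i. \<not> c i) [0..<n])"
  have split: "A = mset xs1 + mset xs2"
  proof -
    have "A = mset (map (nth xs) [0..<n])" using mxs unfolding n_def by (simp add: map_nth)
    also have "\<dots> = image_mset (nth xs) (mset [0..<n])" by simp
    also have "mset [0..<n] = filter_mset c (mset [0..<n]) + filter_mset (\<lambda>i. \<not> c i) (mset [0..<n])"
      by (rule multiset_partition)
    finally show ?thesis unfolding xs1_def xs2_def by (simp add: mset_filter)
  qed
  have h1: "p \<in> convex hull (set xs1)"
  proof (rule hull_crit)
    fix a :: "real \<times> real" assume a: "a \<noteq> 0"
    then obtain i where i: "i \<in> Sa a" "c i" using both by blast
    have "xs!i \<in> set xs1" using i unfolding xs1_def Sa_def by auto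
    moreover have "inner a (xs!i) \<le> inner a p" using i unfolding Sa_def W_def by (simp add: inner_diff_right)
    ultimately show "\<exists>x\<in>set xs1. inner a x \<le> inner a p" by blast
  qed simp
  have h2: "p \<in> convex hull (set xs2)"
  proof (rule hull_crit)
    fix a :: "real \<times> real" assume a: "a \<noteq> 0"
    then obtain i where i: "i \<in> Sa a" "\<not> c i" using both by blast
    have "xs!i \<in> set xs2" using i unfolding xs2_def Sa_def by auto
    moreover have "inner a (xs!i) \<le> inner a p" using i unfolding Sa_def W_def by (simp add: inner_diff_right)
    ultimately show "\<exists>x\<in>set xs2. inner a x \<le> inner a p" by blast
  qed simp
  show ?thesis using split h1 h2 by (intro exI[of _ "mset xs1"] exI[of _ "mset xs2"]) simp
qed

end
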